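(* Let $m\ge1$ and work in $\Lambda^{\pm}_m=\mathbb Z[x_1^{\pm1},\dots,x_m^{\pm1}]^{S_m}$. Then: (1) for every $k\in\mathbb Z$, $H_k=h_k-h_k^{(\infty)}$; equivalently $H_k=h_k$ for $k\ge0$, $H_k=0$ for $-m<k<0$, and $H_k=-h^{(\infty)}_k$ for $k\le -m$; (2) for every $k\in\mathbb Z$, $H_k(x_1,\dots,x_m)-x_1H_{k-1}(x_1,\dots,x_m)=H_k(x_2,\dots,x_m)$, where the right-hand side is the corresponding element defined for the $m-1$ variables $x_2,\dots,x_m$; (3) if $m=1$, then $H_k(x_1)-x_1H_{k-1}(x_1)=0$ for every $k\in\mathbb Z$.
   Context: For a sequence of integers $\lambda=(\lambda_1,\dots,\lambda_m)$ define $E_\lambda$ by $E_\lambda(x)\prod_{i<j}(x_i-x_j)=\sum_{\sigma\in S_m}\mathrm{sgn}(\sigma)\sigma(x_1^{\lambda_1+m-1}x_2^{\lambda_2+m-2}\cdots x_m^{\lambda_m})$, and set $H_k=E_{(k,0,\dots,0)}$ for $k\in\mathbb Z$. Define $h_k$ and $h_k^{(\infty)}$ by the expansions of $1/\prod_{i=1}^m(1-x_it)$ at $t=0$ and $t=\infty$: $\frac{1}{\prod_i(1-x_it)}=\sum_{k\ge0}h_kt^k=\sum_{k\le -m}h^{(\infty)}_kt^k$, with $h_k=0$ for $k<0$ and $h_k^{(\infty)}=0$ for $k>-m$. *)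

theory Defs
  imports Complex_Main "HOL-Combinatorics.Permutations"
    "HOL-Computational_Algebra.Formal_Laurent_Series"
begin

text \<open>Laurent polynomials in m variables are rendered as functions of a list xs of
  m complex values (evaluation at a point); indices are 0-based.\<close>

definition vandermonde :: "complex list \<Rightarrow> complex" where
  "vandermonde xs = (\<Prod>i<length xs. \<Prod>j\<in>{i<..<length xs}. (xs ! i - xs ! j))"

definition alternant :: "int list \<Rightarrow> complex list \<Rightarrow> complex" where
  "alternant lam xs = (let m = length xs in
     (\<Sum>\<sigma> | \<sigma> permutes {..<m}. of_int (sign \<sigma>) *
        (\<Prod>i<m. (xs ! (\<sigma> i)) powi (lam ! i + int (m - 1 - i)))))"

definition E :: "int list \<Rightarrow> complex list \<Rightarrow> complex" where
  "E lam xs = alternant lam xs / vandermonde xs"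

definition H :: "int \<Rightarrow> complex list \<Rightarrow> complex" where
  "H k xs = E (k # replicate (length xs - 1) 0) xs"

definition h :: "int \<Rightarrow> complex list \<Rightarrow> complex" where
  "h k xs = fls_nth (inverse (\<Prod>i<length xs. (1 - fls_const (xs ! i) * fls_X))) (k)"

text \<open>h^infinity_k: coefficient of t^k in the expansion of 1/prod(1 - x_i t) at
  t = infinity, computed in Laurent series in s = 1/t (so t = fls_X_inv and
  the coefficient of t^k is the coefficient of s^(-k)).\<close>
definition hinf :: "int \<Rightarrow> complex list \<Rightarrow> complex" where
  "hinf k xs = fls_nth (inverse (\<Prod>i<length xs. (1 - fls_const (xs ! i) * fls_X_inv))) ((-k))"

end

theory Submission
  imports Defs "Jordan_Normal_Form.Determinant"
begin

definition PX :: "complex list \<Rightarrow> complex fls" where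
  "PX xs = (\<Prod>i<length xs. (1 - fls_const (xs ! i) * fls_X))"
definition QX :: "complex list \<Rightarrow> complex fls" where
  "QX xs = (\<Prod>i<length xs. (1 - fls_const (xs ! i) * fls_X_inv))"

lemma PX_Cons: "PX (x # ys) = (1 - fls_const x * fls_X) * PX ys"
  unfolding PX_def length_Cons prod.lessThan_Suc_shift by simp
lemma QX_Cons: "QX (x # ys) = (1 - fls_const x * fls_X_inv) * QX ys"
  unfolding QX_def length_Cons prod.lessThan_Suc_shift by simp

lemma fX_sub: "fls_subdegree (1 - fls_const (c::complex) * fls_X) = 0"
  by (rule fls_subdegree_eqI) auto
lemma fX_nz: "(1 - fls_const (c::complex) * fls_X) \<noteq> 0"
proof
  assume "(1 - fls_const (c::complex) * fls_X) = 0"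
  hence "fls_nth (1 - fls_const (c::complex) * fls_X) 0 = 0" by simp
  thus False by simp
qed
lemma fXi_sub: "c \<noteq> 0 \<Longrightarrow> fls_subdegree (1 - fls_const (c::complex) * fls_X_inv) = -1"
  by (rule fls_subdegree_eqI) auto
lemma fXi_nz: "(1 - fls_const (c::complex) * fls_X_inv) \<noteq> 0"
proof
  assume "(1 - fls_const (c::complex) * fls_X_inv) = 0"
  hence "fls_nth (1 - fls_const (c::complex) * fls_X_inv) 0 = 0" by simp
  thus False by simp
qed

lemma PX_nz: "PX xs \<noteq> 0"
proof (induction xs)
  case Nil thus ?case by (simp add: PX_def)
next
  case (Cons x xs) thus ?case using fX_nz[of x] by (simp only: PX_Cons mult_eq_0_iff) auto
qed
lemma QX_nz: "QX xs \<noteq> 0"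
proof (induction xs)
  case Nil thus ?case by (simp add: QX_def)
next
  case (Cons x xs) thus ?case using fXi_nz[of x] by (simp only: QX_Cons mult_eq_0_iff) auto
qed

lemma PX_sub: "fls_subdegree (PX xs) = 0"
proof (induction xs)
  case Nil thus ?case by (simp add: PX_def)
next
  case (Cons x xs) thus ?case by (simp only: PX_Cons fls_subdegree_mult[OF fX_nz PX_nz] fX_sub)
qed
lemma QX_sub: "0 \<notin> set xs \<Longrightarrow> fls_subdegree (QX xs) = - int (length xs)"
proof (induction xs)
  case Nil thus ?case by (simp add: QX_def)
next
  case (Cons x xs) thus ?case by (simp only: QX_Cons fls_subdegree_mult[OF fXi_nz QX_nz]) (simp add: fXi_sub)
qed

lemma h_neg: "k < 0 \<Longrightarrow> h k xs = 0"
  unfolding h_def PX_def[symmetric] by (simp add: PX_sub)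
lemma hinf_pos: "0 \<notin> set xs \<Longrightarrow> k > 0 \<Longrightarrow> hinf k xs = 0"
  unfolding hinf_def QX_def[symmetric] by (simp add: QX_sub)

lemma h_Nil: "h k [] = (if k = 0 then 1 else 0)"
  unfolding h_def by simp
lemma hinf_Nil: "hinf k [] = (if k = 0 then 1 else 0)"
  unfolding hinf_def by simp

lemma h_rec: "h k (x # ys) - x * h (k - 1) (x # ys) = h k ys"
proof -
  let ?G = "inverse (PX (x # ys))"
  have "inverse (PX ys) = ?G * (1 - fls_const x * fls_X)"
    using fX_nz[of x] PX_nz[of ys] by (simp add: PX_Cons field_simps)
  also have "\<dots> = ?G - fls_const x * (?G * fls_X)" by (simp add: algebra_simps)
  finally have "fls_nth (inverse (PX ys)) k = fls_nth (?G - fls_const x * (?G * fls_X)) k" by simp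
  thus ?thesis unfolding h_def PX_def[symmetric] by (simp add: fls_X_times_conv_shift)
qed

lemma hinf_rec: "hinf k (x # ys) - x * hinf (k - 1) (x # ys) = hinf k ys"
proof -
  let ?G = "inverse (QX (x # ys))"
  have "inverse (QX ys) = ?G * (1 - fls_const x * fls_X_inv)"
    using fXi_nz[of x] QX_nz[of ys] by (simp add: QX_Cons field_simps)
  also have "\<dots> = ?G - fls_const x * (?G * fls_X_inv)" by (simp add: algebra_simps)
  finally have "fls_nth (inverse (QX ys)) (-k) = fls_nth (?G - fls_const x * (?G * fls_X_inv)) (-k)" by simp
  thus ?thesis unfolding hinf_def QX_def[symmetric] by (simp add: fls_X_inv_times_conv_shift)
qed

definition D :: "complex set \<Rightarrow> int \<Rightarrow> complex" where
  "D S p = (\<Sum>a\<in>S. a powi p / (\<Prod>b\<in>S-{a}. (a - b)))"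

lemma D_R:
  assumes fin: "finite S" and c: "c \<in> S" and z: "0 \<notin> S"
  shows "D S (p + 1) - c * D S p = D (S - {c}) p"
proof -
  have "D S (p + 1) - c * D S p = (\<Sum>a\<in>S. (a powi (p+1) - c * a powi p) / (\<Prod>b\<in>S-{a}. (a - b)))"
    unfolding D_def by (simp add: sum_subtractf sum_distrib_left diff_divide_distrib)
  also have "\<dots> = (\<Sum>a\<in>S. a powi p * (a - c) / (\<Prod>b\<in>S-{a}. (a - b)))"
  proof (rule sum.cong[OF refl])
    fix a assume "a \<in> S"
    hence "a \<noteq> 0" using z by auto
    hence "a powi (p+1) = a powi p * a" by (simp add: power_int_add_1)
    thus "(a powi (p+1) - c * a powi p) / (\<Prod>b\<in>S-{a}. (a - b)) = a powi p * (a - c) / (\<Prod>b\<in>S-{a}. (a - b))"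
      by (simp add: algebra_simps)
  qed
  also have "\<dots> = (\<Sum>a\<in>S-{c}. a powi p * (a - c) / (\<Prod>b\<in>S-{a}. (a - b)))"
    using sum.remove[OF fin c, of "\<lambda>a. a powi p * (a - c) / (\<Prod>b\<in>S-{a}. (a - b))"] by simp
  also have "\<dots> = D (S - {c}) p" unfolding D_def
  proof (rule sum.cong[OF refl])
    fix a assume a: "a \<in> S - {c}"
    have "(\<Prod>b\<in>S-{a}. (a - b)) = (a - c) * (\<Prod>b\<in>S-{a}-{c}. (a - b))"
      using a c fin by (subst prod.remove[of _ c]) auto
    also have "S-{a}-{c} = S-{c}-{a}" by auto
    finally show "a powi p * (a - c) / (\<Prod>b\<in>S-{a}. (a - b)) = a powi p / (\<Prod>b\<in>S-{c}-{a}. (a - b))"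
      using a by simp
  qed
  finally show ?thesis .
qed

lemma D_single: "D {a} p = a powi p"
  unfolding D_def by simp

lemma D_V:
  assumes "finite S" "card S = Suc n" "0 \<notin> S"
  shows "D S (int n) = 1 \<and> (\<forall>p<n. D S (int p) = 0)"
  using assms
proof (induction n arbitrary: S)
  case 0
  then obtain a where "S = {a}" by (auto simp: card_Suc_eq)
  thus ?case by (simp add: D_single)
next
  case (Suc n)
  have "S \<noteq> {}" using Suc.prems(2) by auto
  then obtain a where a: "a \<in> S" by blast
  have "card (S - {a}) = Suc n" using Suc.prems(1,2) a by (simp add: card_Diff_singleton)
  hence "S - {a} \<noteq> {}" by (metis card.empty nat.distinct(1))
  then obtain c where c: "c \<in> S - {a}" by blast
  have ac: "a \<in> S" "c \<in> S" "a \<noteq> c" using a c by auto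
  have cards: "card (S - {a}) = Suc n" "card (S - {c}) = Suc n"
    using Suc.prems(1,2) ac(1,2) by (simp_all add: card_Diff_singleton)
  have IHa: "D (S - {a}) (int n) = 1 \<and> (\<forall>p<n. D (S - {a}) (int p) = 0)"
    using Suc.IH[of "S - {a}"] cards Suc.prems(1,3) by blast
  have IHc: "D (S - {c}) (int n) = 1 \<and> (\<forall>p<n. D (S - {c}) (int p) = 0)"
    using Suc.IH[of "S - {c}"] cards Suc.prems(1,3) by blast
  have key: "(a - c) * D S q = D (S - {c}) q - D (S - {a}) q" for q
    using D_R[OF Suc.prems(1) ac(1) Suc.prems(3), of q] D_R[OF Suc.prems(1) ac(2) Suc.prems(3), of q]
    by (simp add: algebra_simps)
  have z: "D S (int p) = 0" if "p < Suc n" for p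
  proof -
    have "D (S - {c}) (int p) = D (S - {a}) (int p)"
      using IHa IHc that by (cases "p = n") auto
    hence "(a - c) * D S (int p) = 0" using key by simp
    thus ?thesis using ac by simp
  qed
  have "D S (int n + 1) - c * D S (int n) = D (S - {c}) (int n)"
    by (rule D_R[OF Suc.prems(1) ac(2) Suc.prems(3)])
  hence "D S (int (Suc n)) = 1" using z[of n] IHc by (simp add: add.commute)
  thus ?case using z by simp
qed

lemma set_nth_image: "set xs = nth xs ` {..<length xs}"
  by (auto simp: set_conv_nth)

lemma sum_nth_set: "distinct xs \<Longrightarrow> (\<Sum>j<length xs. f (xs ! j)) = (\<Sum>a\<in>set xs. f a)"
  by (subst set_nth_image, subst sum.reindex) (auto intro: inj_on_nth)
lemma prod_nth_set: "distinct xs \<Longrightarrow> (\<Prod>j<length xs. f (xs ! j)) = (\<Prod>a\<in>set xs. f a)"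
  by (subst set_nth_image, subst prod.reindex) (auto intro: inj_on_nth)

definition del :: "nat \<Rightarrow> 'a list \<Rightarrow> 'a list" where
  "del j xs = take j xs @ drop (Suc j) xs"

lemma del_length: "j < length xs \<Longrightarrow> length (del j xs) = length xs - 1"
  unfolding del_def by simp

lemma del_nth: "j < length xs \<Longrightarrow> i < length xs - 1 \<Longrightarrow>
   del j xs ! i = xs ! (if i < j then i else Suc i)"
  unfolding del_def by (auto simp: nth_append min_def)

lemma del_props:
  assumes "distinct xs" "j < length xs"
  shows "distinct (del j xs)" "set (del j xs) = set xs - {xs ! j}"
proof -
  have e: "xs = take j xs @ xs ! j # drop (Suc j) xs" using id_take_nth_drop assms(2) by blast
  have d: "distinct (take j xs @ xs ! j # drop (Suc j) xs)" using assms(1) e by simp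
  show "distinct (del j xs)" using d unfolding del_def by simp
  have "set xs = set (take j xs) \<union> {xs ! j} \<union> set (drop (Suc j) xs)"
    by (subst e) auto
  thus "set (del j xs) = set xs - {xs ! j}" using d unfolding del_def by auto
qed

lemma del_Suc: "del (Suc j) (x # ys) = x # del j ys"
  unfolding del_def by simp
lemma del_0: "del 0 (x # ys) = ys"
  unfolding del_def by simp

lemma gtlt0_Suc: "{0<..<Suc n} = Suc ` {..<n}"
proof -
  have 1: "{..<n} = {0..<n}" by auto
  have 2: "{0<..<Suc n} = {Suc 0..<Suc n}" by auto
  show ?thesis by (simp only: 1 2 image_Suc_atLeastLessThan)
qed
lemma gtlt_Suc: "{Suc i<..<Suc n} = Suc ` {i<..<n}"
proof -
  have 1: "{i<..<n} = {Suc i..<n}" by auto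
  have 2: "{Suc i<..<Suc n} = {Suc (Suc i)..<Suc n}" by auto
  show ?thesis by (simp only: 1 2 image_Suc_atLeastLessThan)
qed
lemma VR_aux: "(x - y) * P * ((-1)^j * Q * V) = (-1)^(Suc j) * ((y - x) * Q) * (P * (V::complex))"
  by (simp add: algebra_simps)

lemma V_Cons: "vandermonde (x # ys) = (\<Prod>l<length ys. (x - ys ! l)) * vandermonde ys"
proof -
  show ?thesis unfolding vandermonde_def length_Cons prod.lessThan_Suc_shift
    by (simp add: gtlt0_Suc gtlt_Suc prod.reindex)
qed

lemma V_Cons_d: "distinct (x # ys) \<Longrightarrow> vandermonde (x # ys) = (\<Prod>b\<in>set ys. (x - b)) * vandermonde ys"
  using V_Cons prod_nth_set[of ys "\<lambda>b. x - b"] by simp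

lemma V_nz: "distinct xs \<Longrightarrow> vandermonde xs \<noteq> 0"
proof (induction xs)
  case Nil thus ?case by (simp add: vandermonde_def)
next
  case (Cons x ys)
  have "(\<Prod>b\<in>set ys. (x - b)) \<noteq> 0" using Cons.prems by auto
  thus ?case using Cons V_Cons_d by simp
qed

lemma VR: "distinct xs \<Longrightarrow> j < length xs \<Longrightarrow>
  vandermonde xs = (-1)^j * (\<Prod>b\<in>set xs - {xs ! j}. (xs ! j - b)) * vandermonde (del j xs)"
proof (induction xs arbitrary: j)
  case Nil thus ?case by simp
next
  case (Cons x ys)
  show ?case
  proof (cases j)
    case 0
    have "set (x # ys) - {x} = set ys" using Cons.prems by auto
    thus ?thesis using 0 V_Cons_d[OF Cons.prems(1)] by (simp add: del_0)
  next
    case (Suc j')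
    let ?y = "ys ! j'"
    have j': "j' < length ys" using Cons.prems Suc by simp
    have dys: "distinct ys" "x \<notin> set ys" using Cons.prems by auto
    have y: "?y \<in> set ys" using j' by simp
    have xy: "x \<noteq> ?y" using dys y by auto
    have IH: "vandermonde ys = (-1)^j' * (\<Prod>b\<in>set ys - {?y}. (?y - b)) * vandermonde (del j' ys)"
      using Cons.IH[OF dys(1) j'] .
    have sd: "set (del j' ys) = set ys - {?y}" "distinct (del j' ys)" using del_props[OF dys(1) j'] by auto
    have dxd: "distinct (x # del j' ys)" using sd dys by auto
    have P1: "(\<Prod>b\<in>set ys. (x - b)) = (x - ?y) * (\<Prod>b\<in>set ys - {?y}. (x - b))"
      using y by (subst prod.remove[of _ ?y]) auto
    have S: "set (x # ys) - {?y} = insert x (set ys - {?y})" using xy by auto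
    have P2: "(\<Prod>b\<in>set (x # ys) - {?y}. (?y - b)) = (?y - x) * (\<Prod>b\<in>set ys - {?y}. (?y - b))"
      unfolding S using dys by (subst prod.insert) auto
    have "vandermonde (x # ys) = (\<Prod>b\<in>set ys. (x - b)) * vandermonde ys"
      using V_Cons_d[OF Cons.prems(1)] .
    also have "\<dots> = (x - ?y) * (\<Prod>b\<in>set ys - {?y}. (x - b)) *
       ((-1)^j' * (\<Prod>b\<in>set ys - {?y}. (?y - b)) * vandermonde (del j' ys))"
      using P1 IH by simp
    also have "\<dots> = (-1)^j * (\<Prod>b\<in>set (x # ys) - {(x # ys) ! j}. ((x # ys) ! j - b)) *
        vandermonde (del j (x # ys))"
      unfolding Suc del_Suc V_Cons_d[OF dxd] nth_Cons_Suc P2 sd(1) by (rule VR_aux)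
    finally show ?thesis .
  qed
qed

definition Mx :: "int \<Rightarrow> complex list \<Rightarrow> complex mat" where
  "Mx k xs = mat (length xs) (length xs)
     (\<lambda>(i,j). xs ! j powi ((if i = 0 then k else 0) + int (length xs - 1 - i)))"

lemma Mx_carrier: "Mx k xs \<in> carrier_mat (length xs) (length xs)"
  unfolding Mx_def by simp

lemma alt_det:
  assumes "length xs \<ge> 1"
  shows "alternant (k # replicate (length xs - 1) 0) xs = det (Mx k xs)"
proof -
  let ?m = "length xs"
  have "det (Mx k xs) = (\<Sum>p\<in>{p. p permutes {0..<?m}}. signof p * (\<Prod>i=0..<?m. Mx k xs $$ (i, p i)))"
    by (rule det_def'[OF Mx_carrier])
  also have "\<dots> = alternant (k # replicate (length xs - 1) 0) xs"
    unfolding alternant_def Let_def atLeast0LessThan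
  proof (rule sum.cong[OF refl])
    fix p assume "p \<in> {p. p permutes {..<?m}}"
    hence p: "p permutes {..<?m}" by simp
    have "(\<Prod>i<?m. Mx k xs $$ (i, p i)) =
          (\<Prod>i<?m. xs ! p i powi ((k # replicate (?m - 1) 0) ! i + int (?m - 1 - i)))"
    proof (rule prod.cong[OF refl])
      fix i assume i: "i \<in> {..<?m}"
      hence pi: "p i < ?m" using p by (metis lessThan_iff permutes_in_image)
      have "(k # replicate (?m - 1) 0) ! i = (if i = 0 then k else 0)"
        using i by (cases i) auto
      thus "Mx k xs $$ (i, p i) = xs ! p i powi ((k # replicate (?m - 1) 0) ! i + int (?m - 1 - i))"
        unfolding Mx_def using i pi by simp
    qed
    thus "signof p * (\<Prod>i<?m. Mx k xs $$ (i, p i)) =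
          of_int (sign p) * (\<Prod>i<?m. xs ! p i powi ((k # replicate (?m - 1) 0) ! i + int (?m - 1 - i)))"
      by simp
  qed
  finally show ?thesis by simp
qed

lemma Mx_delete:
  assumes "j < length xs"
  shows "mat_delete (Mx k xs) 0 j = Mx 0 (del j xs)"
proof (rule eq_matI)
  show "dim_row (mat_delete (Mx k xs) 0 j) = dim_row (Mx 0 (del j xs))"
    using assms by (simp add: Mx_def del_length)
  show "dim_col (mat_delete (Mx k xs) 0 j) = dim_col (Mx 0 (del j xs))"
    using assms by (simp add: Mx_def del_length)
  fix i' j' assume i': "i' < dim_row (Mx 0 (del j xs))" and j': "j' < dim_col (Mx 0 (del j xs))"
  hence i'': "i' < length xs - 1" and j'': "j' < length xs - 1" using assms by (auto simp: Mx_def del_length)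
  show "mat_delete (Mx k xs) 0 j $$ (i', j') = Mx 0 (del j xs) $$ (i', j')"
  proof -
    have ex: "int (length xs - 1 - Suc i') = int (length (del j xs) - 1 - i')"
      using assms by (simp add: del_length)
    have "mat_delete (Mx k xs) 0 j $$ (i', j') = xs ! (if j' < j then j' else Suc j') powi int (length xs - 1 - Suc i')"
      unfolding mat_delete_def Mx_def using i'' j'' assms by (simp del: power_int_of_nat)
    also have "\<dots> = Mx 0 (del j xs) $$ (i', j')"
      unfolding ex Mx_def using i'' j'' assms by (simp add: del_length del_nth del: power_int_of_nat)
    finally show ?thesis .
  qed
qed

lemma det_main:
  "distinct xs \<Longrightarrow> 0 \<notin> set xs \<Longrightarrow> length xs = Suc n \<Longrightarrow>
    det (Mx k xs) = vandermonde xs * D (set xs) (k + int n)"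
proof (induction n arbitrary: xs k)
  case 0
  then obtain x where x: "xs = [x]" by (cases xs) auto
  have "det (Mx k xs) = (\<Sum>j<1. Mx k xs $$ (0,j) * cofactor (Mx k xs) 0 j)"
    using laplace_expansion_row[OF Mx_carrier[of k xs]] x by simp
  also have "\<dots> = x powi k"
    unfolding cofactor_def using x by (simp add: Mx_def mat_delete_def)
  finally show ?case using x by (simp add: D_single vandermonde_def)
next
  case (Suc n)
  let ?m = "length xs"
  let ?S = "set xs"
  have m: "?m = Suc (Suc n)" by (rule Suc.prems(3))
  have "det (Mx k xs) = (\<Sum>j<?m. Mx k xs $$ (0,j) * cofactor (Mx k xs) 0 j)"
    using laplace_expansion_row[OF Mx_carrier[of k xs]] m by simp
  also have "\<dots> = (\<Sum>j<?m. vandermonde xs * ((xs ! j) powi (k + int (Suc n)) /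
        (\<Prod>b\<in>?S - {xs ! j}. (xs ! j - b))))"
  proof (rule sum.cong[OF refl])
    fix j assume j: "j \<in> {..<?m}"
    hence j': "j < ?m" by simp
    have dd: "distinct (del j xs)" "set (del j xs) = ?S - {xs ! j}"
      using del_props[OF Suc.prems(1) j'] by auto
    have ld: "length (del j xs) = Suc n" using del_length[OF j'] m by simp
    have z: "0 \<notin> set (del j xs)" using dd Suc.prems(2) by auto
    have cd: "card (set (del j xs)) = Suc n" using distinct_card[OF dd(1)] ld by simp
    have IH: "det (Mx 0 (del j xs)) = vandermonde (del j xs)"
      using Suc.IH[OF dd(1) z ld, of 0] D_V[OF _ cd z] by simp
    have P: "(\<Prod>b\<in>?S - {xs ! j}. (xs ! j - b)) \<noteq> 0" by auto
    have V: "vandermonde xs = (-1)^j * (\<Prod>b\<in>?S - {xs ! j}. (xs ! j - b)) * vandermonde (del j xs)"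
      by (rule VR[OF Suc.prems(1) j'])
    have e: "Mx k xs $$ (0,j) = xs ! j powi (k + int (Suc n))"
      unfolding Mx_def using j' m by simp
    have "Mx k xs $$ (0,j) * cofactor (Mx k xs) 0 j =
          xs ! j powi (k + int (Suc n)) * ((-1)^j * vandermonde (del j xs))"
      unfolding cofactor_def e Mx_delete[OF j'] IH by simp
    also have "\<dots> = vandermonde xs * ((xs ! j) powi (k + int (Suc n)) /
        (\<Prod>b\<in>?S - {xs ! j}. (xs ! j - b)))"
      unfolding V using P by (simp add: field_simps)
    finally show "Mx k xs $$ (0,j) * cofactor (Mx k xs) 0 j = vandermonde xs * ((xs ! j) powi (k + int (Suc n)) /
        (\<Prod>b\<in>?S - {xs ! j}. (xs ! j - b)))" .
  qed
  also have "\<dots> = vandermonde xs * D ?S (k + int (Suc n))"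
    unfolding D_def sum_distrib_left[symmetric]
    by (rule arg_cong[where f = "\<lambda>t. vandermonde xs * t"], rule sum_nth_set[OF Suc.prems(1)])
  finally show ?case .
qed

lemma H_D:
  assumes "distinct xs" "0 \<notin> set xs" "length xs \<ge> 1"
  shows "H k xs = D (set xs) (k + int (length xs) - 1)"
proof -
  obtain n where n: "length xs = Suc n" using assms(3) by (cases "length xs") auto
  have "H k xs = det (Mx k xs) / vandermonde xs"
    unfolding H_def E_def using alt_det assms(3) by simp
  also have "\<dots> = D (set xs) (k + int n)"
    using det_main[OF assms(1,2) n] V_nz[OF assms(1)] by simp
  finally show ?thesis using n by simp
qed

lemma uniq_up:
  fixes a b :: "int \<Rightarrow> complex"
  assumes rec: "\<And>k. a k - x * a (k - 1) = b k - x * b (k - 1)"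
    and neg: "\<And>k. k < 0 \<Longrightarrow> a k = b k"
  shows "a k = b k"
proof -
  have P: "a (int n - 1) = b (int n - 1)" for n
  proof (induction n)
    case 0 thus ?case using neg by simp
  next
    case (Suc n)
    have "a (int n) - x * a (int n - 1) = b (int n) - x * b (int n - 1)" by (rule rec)
    thus ?case using Suc by simp
  qed
  show ?thesis
  proof (cases "k < 0")
    case True thus ?thesis using neg by simp
  next
    case False
    hence "k = int (nat k + 1) - 1" by simp
    thus ?thesis using P[of "nat k + 1"] by simp
  qed
qed

lemma uniq_down:
  fixes a b :: "int \<Rightarrow> complex"
  assumes x: "x \<noteq> 0"
    and rec: "\<And>k. a k - x * a (k - 1) = b k - x * b (k - 1)"
    and pos: "\<And>k. k > 0 \<Longrightarrow> a k = b k"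
  shows "a k = b k"
proof -
  have P: "a (1 - int n) = b (1 - int n)" for n
  proof (induction n)
    case 0 thus ?case using pos by simp
  next
    case (Suc n)
    have "a (1 - int n) - x * a (1 - int n - 1) = b (1 - int n) - x * b (1 - int n - 1)" by (rule rec)
    hence "x * a (1 - int n - 1) = x * b (1 - int n - 1)" using Suc by simp
    hence "a (1 - int n - 1) = b (1 - int n - 1)" using x by simp
    moreover have "1 - int n - 1 = 1 - int (Suc n)" by simp
    ultimately show ?case by simp
  qed
  show ?thesis
  proof (cases "k > 0")
    case True thus ?thesis using pos by simp
  next
    case False
    hence "k = 1 - int (nat (1 - k))" by simp
    thus ?thesis using P[of "nat (1 - k)"] by simp
  qed
qed

lemma powi_rec: "(x::complex) \<noteq> 0 \<Longrightarrow> x powi k = x * x powi (k - 1)"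
  using power_int_add_1'[of x "k - 1"] by simp

lemma h_formula:
  "distinct xs \<Longrightarrow> 0 \<notin> set xs \<Longrightarrow> xs \<noteq> [] \<Longrightarrow>
   h k xs = (if k \<ge> 0 then D (set xs) (k + int (length xs) - 1) else 0)"
proof (induction xs arbitrary: k)
  case Nil thus ?case by simp
next
  case (Cons x ys)
  have x: "x \<noteq> 0" using Cons.prems by auto
  let ?b = "\<lambda>k. if k \<ge> 0 then D (set (x # ys)) (k + int (length (x # ys)) - 1) else 0"
  have rb: "?b k - x * ?b (k - 1) = h k ys" for k
  proof (cases "ys = []")
    case True
    thus ?thesis using x powi_rec[OF x, of k] by (auto simp: D_single h_Nil)
  next
    case False
    have dys: "distinct ys" "0 \<notin> set ys" using Cons.prems by auto
    have IH: "h k ys = (if k \<ge> 0 then D (set ys) (k + int (length ys) - 1) else 0)"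
      by (rule Cons.IH[OF dys False])
    have sy: "set ys = set (x # ys) - {x}" using Cons.prems by auto
    have fin: "finite (set (x # ys))" "x \<in> set (x # ys)" "0 \<notin> set (x # ys)" using Cons.prems by auto
    have R: "D (set (x # ys)) (p + 1) - x * D (set (x # ys)) p = D (set ys) p" for p
      unfolding sy by (rule D_R[OF fin])
    obtain n where n: "length ys = Suc n" using False by (cases ys) auto
    have c1: "card (set (x # ys)) = Suc (Suc n)" using distinct_card[OF Cons.prems(1)] n by simp
    have c2: "card (set ys) = Suc n" using distinct_card[OF dys(1)] n by simp
    have V1: "D (set (x # ys)) (int (Suc n)) = 1" using D_V[OF fin(1) c1 fin(3)] by blast
    have V2: "D (set ys) (int n) = 1" using D_V[OF _ c2 dys(2)] by blast
    show ?thesis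
    proof (cases "k > 0")
      case True
      thus ?thesis using IH R[of "k + int (length ys) - 1"] by (simp add: algebra_simps)
    next
      case False
      show ?thesis
      proof (cases "k = 0")
        case True thus ?thesis using IH V1 V2 n by simp
      next
        case False
        thus ?thesis using \<open>\<not> k > 0\<close> IH by simp
      qed
    qed
  qed
  show ?case
    by (rule uniq_up[of "\<lambda>k. h k (x # ys)" x ?b], unfold h_rec rb) (auto simp: h_neg)
qed

lemma hinf_formula:
  "distinct xs \<Longrightarrow> 0 \<notin> set xs \<Longrightarrow> xs \<noteq> [] \<Longrightarrow>
   hinf k xs = (if k < 0 then - D (set xs) (k + int (length xs) - 1) else 0)"
proof (induction xs arbitrary: k)
  case Nil thus ?case by simp
next
  case (Cons x ys)
  have x: "x \<noteq> 0" using Cons.prems by auto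
  let ?b = "\<lambda>k. if k < 0 then - D (set (x # ys)) (k + int (length (x # ys)) - 1) else 0"
  have rb: "?b k - x * ?b (k - 1) = hinf k ys" for k
  proof (cases "ys = []")
    case True
    have "x * x powi (-1) = 1" using powi_rec[OF x, of 0] by simp
    thus ?thesis using x powi_rec[OF x, of k] True by (auto simp: D_single hinf_Nil)
  next
    case False
    have dys: "distinct ys" "0 \<notin> set ys" using Cons.prems by auto
    have IH: "hinf k ys = (if k < 0 then - D (set ys) (k + int (length ys) - 1) else 0)"
      by (rule Cons.IH[OF dys False])
    have sy: "set ys = set (x # ys) - {x}" using Cons.prems by auto
    have fin: "finite (set (x # ys))" "x \<in> set (x # ys)" "0 \<notin> set (x # ys)" using Cons.prems by auto
    have R: "D (set (x # ys)) (p + 1) - x * D (set (x # ys)) p = D (set ys) p" for p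
      unfolding sy by (rule D_R[OF fin])
    obtain n where n: "length ys = Suc n" using False by (cases ys) auto
    have c1: "card (set (x # ys)) = Suc (Suc n)" using distinct_card[OF Cons.prems(1)] n by simp
    have V1: "D (set (x # ys)) (int n) = 0" using D_V[OF fin(1) c1 fin(3)] by simp
    show ?thesis
    proof (cases "k < 0")
      case True
      thus ?thesis using IH R[of "k + int (length ys) - 1"] by (simp add: algebra_simps)
    next
      case False
      show ?thesis
      proof (cases "k = 0")
        case True thus ?thesis using IH V1 n by simp
      next
        case False
        thus ?thesis using \<open>\<not> k < 0\<close> IH by simp
      qed
    qed
  qed
  show ?case
    by (rule uniq_down[OF x, of "\<lambda>k. hinf k (x # ys)" ?b], unfold hinf_rec rb)
       (use Cons.prems in \<open>auto simp: hinf_pos\<close>)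
qed

theorem mainTheorem2:
  fixes xs :: "complex list"
  assumes "length xs \<ge> 1" and "distinct xs" and "0 \<notin> set xs"
  shows "(\<forall>k::int. H k xs = h k xs - hinf k xs)
    \<and> (\<forall>k::int. k \<ge> 0 \<longrightarrow> H k xs = h k xs)
    \<and> (\<forall>k::int. - int (length xs) < k \<and> k < 0 \<longrightarrow> H k xs = 0)
    \<and> (\<forall>k::int. k \<le> - int (length xs) \<longrightarrow> H k xs = - hinf k xs)
    \<and> (length xs \<ge> 2 \<longrightarrow>
        (\<forall>k::int. H k xs - xs ! 0 * H (k - 1) xs = H k (tl xs)))
    \<and> (length xs = 1 \<longrightarrow> (\<forall>k::int. H k xs - xs ! 0 * H (k - 1) xs = 0))"
proof -
  have ne: "xs \<noteq> []" using assms(1) by auto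
  let ?S = "set xs" and ?m = "length xs"
  have HD: "H k xs = D ?S (k + int ?m - 1)" for k by (rule H_D[OF assms(2,3,1)])
  have hF: "h k xs = (if k \<ge> 0 then D ?S (k + int ?m - 1) else 0)" for k
    by (rule h_formula[OF assms(2,3) ne])
  have hiF: "hinf k xs = (if k < 0 then - D ?S (k + int ?m - 1) else 0)" for k
    by (rule hinf_formula[OF assms(2,3) ne])
  obtain n where n: "?m = Suc n" using ne by (cases xs) auto
  have cS: "card ?S = Suc n" using distinct_card[OF assms(2)] n by simp
  have VV: "\<forall>p<n. D ?S (int p) = 0" using D_V[OF _ cS assms(3)] by blast
  have p1: "\<forall>k::int. H k xs = h k xs - hinf k xs" using HD hF hiF by simp
  have p2: "\<forall>k::int. k \<ge> 0 \<longrightarrow> H k xs = h k xs" using HD hF by simp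
  have p3: "\<forall>k::int. - int ?m < k \<and> k < 0 \<longrightarrow> H k xs = 0"
  proof (intro allI impI)
    fix k :: int assume k: "- int ?m < k \<and> k < 0"
    have e: "k + int ?m - 1 = int (nat (k + int ?m - 1))" using k by simp
    have "k + int ?m - 1 < int n" "0 \<le> k + int ?m - 1" using k n by simp_all
    hence "nat (k + int ?m - 1) < n" by (simp add: nat_less_iff)
    thus "H k xs = 0" using HD[of k] VV e by metis
  qed
  have p4: "\<forall>k::int. k \<le> - int ?m \<longrightarrow> H k xs = - hinf k xs" using HD hiF n by simp
  have p5: "?m \<ge> 2 \<longrightarrow> (\<forall>k::int. H k xs - xs ! 0 * H (k - 1) xs = H k (tl xs))"
  proof (intro impI allI)
    fix k :: int assume m2: "?m \<ge> 2"
    obtain x ys where xys: "xs = x # ys" using ne by (cases xs) auto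
    have dys: "distinct ys" "0 \<notin> set ys" "length ys \<ge> 1" using assms xys m2 by auto
    have sy: "set ys = ?S - {x}" using assms(2) xys by auto
    have fin: "finite ?S" "x \<in> ?S" "0 \<notin> ?S" using assms xys by auto
    have "H k xs - xs ! 0 * H (k - 1) xs = D ?S ((k - 1 + int ?m - 1) + 1) - x * D ?S (k - 1 + int ?m - 1)"
      using HD[of k] HD[of "k - 1"] xys by (simp add: algebra_simps)
    also have "\<dots> = D (set ys) (k - 1 + int ?m - 1)" unfolding sy by (rule D_R[OF fin])
    also have "\<dots> = H k ys" using H_D[OF dys, of k] xys by (simp add: algebra_simps)
    finally show "H k xs - xs ! 0 * H (k - 1) xs = H k (tl xs)" using xys by simp
  qed
  have p6: "?m = 1 \<longrightarrow> (\<forall>k::int. H k xs - xs ! 0 * H (k - 1) xs = 0)"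
  proof (intro impI allI)
    fix k :: int assume m1: "?m = 1"
    then obtain x where x: "xs = [x]" by (cases xs) (auto simp: length_Suc_conv)
    have x0: "x \<noteq> 0" using assms(3) x by auto
    show "H k xs - xs ! 0 * H (k - 1) xs = 0"
      using HD[of k] HD[of "k - 1"] x powi_rec[OF x0, of k] by (simp add: D_single)
  qed
  show ?thesis using p1 p2 p3 p4 p5 p6 by blast
qed

end
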